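(* Let $J = \{k \in \mathbb{N} : \mathrm{N}(k+1) - \mathrm{N}(k) = 2\}$. Then $J = \{2^{m+1} - (m+1) - 1 : m \in \mathbb{N}\}$.
   Context: The function $\mathrm{N} : \mathbb{N} \to \mathbb{N}$, $\mathbb{N} = \{1,2,\dots\}$, is defined recursively by $\mathrm{N}(1) = 2$ and, for $k \ge 2$, $\mathrm{N}(k) = \max_{i \in \{2,\dots,k\}} \min(2i, \mathrm{N}(k-i+1) + i)$. *)

theory Defs
  imports Main
begin

text \<open>The function N of the paper, on positive naturals. We use type nat; the value at 0
  is an irrelevant artefact (set to 2) and is never used in the statement.\<close>

function Nf :: "nat \<Rightarrow> nat" where
  "Nf k = (if k \<le> 1 then 2
           else Max ((\<lambda>i. min (2 * i) (Nf (k - i + 1) + i)) ` {2..k}))"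
  by auto
termination
  by (relation "measure id") auto

end

theory Submission
  imports Defs
begin

declare Nf.simps[simp del]

definition tt :: "nat \<Rightarrow> nat" where "tt m = 2 ^ (m + 1) - (m + 1) - 1"

lemma pow_ge: "m + 1 \<le> (2::nat) ^ m"
  by (induction m) auto

lemma tt_eq: "tt m + m + 2 = 2 ^ Suc m"
  using pow_ge[of m] unfolding tt_def by simp

lemma tt_Suc_less: "tt m < tt (Suc m)"
proof -
  have "tt (Suc m) + Suc m + 2 = 2 * 2 ^ Suc m" using tt_eq[of "Suc m"] by simp
  moreover have "tt m + m + 2 = 2 ^ Suc m" by (rule tt_eq)
  moreover have "m + 2 \<le> 2 ^ Suc m" using pow_ge[of "Suc m"] by simp
  ultimately show ?thesis by linarith
qed

lemma tt_smono: "strict_mono tt"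
  unfolding strict_mono_Suc_iff using tt_Suc_less by blast

lemma tt_less_iff: "tt m < tt n \<longleftrightarrow> m < n"
  using tt_smono strict_mono_less by blast

lemma tt_le_iff: "tt m \<le> tt n \<longleftrightarrow> m \<le> n"
  using tt_smono strict_mono_less_eq by blast

lemma tt0: "tt 0 = 0" by (simp add: tt_def)

lemma tt_ge: "k < tt (Suc k)"
proof -
  have "tt (Suc k) + Suc k + 2 = 2 ^ Suc (Suc k)" by (rule tt_eq)
  moreover have "k + 1 \<le> 2 ^ k" by (rule pow_ge)
  moreover have "(2::nat) ^ Suc (Suc k) = 4 * 2 ^ k" by simp
  ultimately show ?thesis by linarith
qed

definition G :: "nat \<Rightarrow> nat" where "G k = (LEAST m. k \<le> tt (Suc m))"

lemma G_eq: assumes "tt m < k" "k \<le> tt (Suc m)" shows "G k = m"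
  unfolding G_def
proof (rule Least_equality)
  show "k \<le> tt (Suc m)" by fact
  fix y assume y: "k \<le> tt (Suc y)"
  show "m \<le> y"
  proof (rule ccontr)
    assume "\<not> m \<le> y"
    then have "tt (Suc y) \<le> tt m" using tt_le_iff by simp
    with y assms(1) show False by simp
  qed
qed

lemma G_props: assumes "1 \<le> k" shows "tt (G k) < k" "k \<le> tt (Suc (G k))"
proof -
  have ex: "k \<le> tt (Suc k)" using tt_ge[of k] by simp
  show "k \<le> tt (Suc (G k))" unfolding G_def by (rule LeastI[of _ k]) (rule ex)
  show "tt (G k) < k"
  proof (cases "G k")
    case 0 then show ?thesis using assms tt0 by simp
  next
    case (Suc p)
    then have "p < (LEAST m. k \<le> tt (Suc m))" by (simp add: G_def)
    then have "\<not> k \<le> tt (Suc p)" by (rule not_less_Least)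
    then show ?thesis using Suc by simp
  qed
qed

lemma main: "tt m < k \<Longrightarrow> k \<le> tt (Suc m) \<Longrightarrow> Nf k = k + m + 1"
proof (induction k arbitrary: m rule: less_induct)
  case (less k)
  show ?case
  proof (cases "k \<le> 1")
    case True
    then have k1: "k = 1" using less.prems by simp
    have "m = 0"
    proof (rule ccontr)
      assume "m \<noteq> 0"
      then have "tt 1 \<le> tt m" using tt_le_iff by simp
      moreover have "tt 1 = 1" by (simp add: tt_def)
      ultimately show False using less.prems k1 by simp
    qed
    then show ?thesis using k1 by (simp add: Nf.simps)
  next
    case False
    then have k2: "k \<ge> 2" by simp
    have m1: "m \<ge> 1"
    proof (rule ccontr)
      assume "\<not> m \<ge> 1"
      then have "m = 0" by simp
      moreover have "tt 1 = 1" by (simp add: tt_def)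
      ultimately show False using less.prems k2 by simp
    qed
    obtain q where q: "q = (2::nat) ^ m" by blast
    have e1: "tt (m - 1) + (m - 1) + 2 = q" using tt_eq[of "m-1"] m1 q by simp
    have e2: "tt m + m + 2 = 2 * q" using tt_eq[of m] q by simp
    have e3: "tt (Suc m) + Suc m + 2 = 4 * q" using tt_eq[of "Suc m"] q by simp
    have qge: "m + 1 \<le> q" using pow_ge q by simp
    have IH: "Nf j = j + G j + 1" if "1 \<le> j" "j < k" for j
      using less.IH[OF that(2) G_props[OF that(1)]] .
    define S where "S = (\<lambda>i. min (2 * i) (Nf (k - i + 1) + i)) ` {2..k}"
    have NS: "Nf k = Max S" using False unfolding S_def by (subst Nf.simps) simp
    have fin: "finite S" unfolding S_def by simp
    have up: "x \<le> k + m + 1" if xS: "x \<in> S" for x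
    proof -
      obtain i where i: "i \<in> {2..k}" "x = min (2 * i) (Nf (k - i + 1) + i)"
        using xS unfolding S_def by auto
      show ?thesis
      proof (cases "2 * i \<le> k + m + 1")
        case True then show ?thesis using i by simp
      next
        case c: False
        define j where "j = k - i + 1"
        have j1: "1 \<le> j" "j < k" using i j_def by auto
        have "j \<le> tt m" using c i e2 e3 less.prems(2) unfolding j_def by auto
        then have "j \<le> tt (Suc (m - 1))" using m1 by simp
        then have "G j \<le> m - 1" unfolding G_def by (rule Least_le)
        then have "Nf j + i \<le> k + m + 1" using IH[OF j1] j_def i m1 by simp
        then show ?thesis using i j_def by simp
      qed
    qed
    define i where "i = (k + m + 2) div 2"
    define j where "j = k - i + 1"
    have ik: "i \<in> {2..k}" using i_def k2 m1 less.prems(1) e2 qge by auto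
    have j1: "1 \<le> j" "j < k" using ik j_def by auto
    have jlow: "tt (m - 1) < j" using less.prems(1) e1 e2 i_def j_def ik by simp
    have "m - 1 \<le> G j"
    proof (rule ccontr)
      assume "\<not> m - 1 \<le> G j"
      then have "tt (Suc (G j)) \<le> tt (m - 1)" using tt_le_iff by simp
      with G_props(2)[OF j1(1)] jlow show False by simp
    qed
    moreover have "Nf (k - i + 1) + i = k + G j + 2"
      using IH[OF j1] j_def ik by auto
    moreover have "k + m + 1 \<le> 2 * i" unfolding i_def by linarith
    ultimately have "k + m + 1 \<le> min (2 * i) (Nf (k - i + 1) + i)"
      using m1 by simp
    moreover have "min (2 * i) (Nf (k - i + 1) + i) \<in> S" using ik unfolding S_def by blast
    ultimately have "k + m + 1 \<le> Max S" using fin Max_ge le_trans by blast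
    moreover have "Max S \<le> k + m + 1" using fin up ik unfolding S_def
      by (simp add: Max_le_iff)
    ultimately show ?thesis using NS by simp
  qed
qed

lemma Nf_closed: "1 \<le> k \<Longrightarrow> Nf k = k + G k + 1"
  using main G_props by blast

theorem lemma7p20:
  shows "{k :: nat. k \<ge> 1 \<and> int (Nf (k + 1)) - int (Nf k) = 2}
         = {2 ^ (m + 1) - (m + 1) - 1 | m :: nat. m \<ge> 1}"
proof -
  have key: "int (Nf (k + 1)) - int (Nf k) = 2 \<longleftrightarrow> k = tt (Suc (G k))" if k: "k \<ge> 1" for k
  proof (cases "k = tt (Suc (G k))")
    case True
    have "G (k + 1) = Suc (G k)"
      by (rule G_eq) (use True tt_Suc_less[of "Suc (G k)"] in auto)
    then show ?thesis using True Nf_closed[OF k] Nf_closed[of "k+1"] by simp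
  next
    case False
    have "G (k + 1) = G k"
      by (rule G_eq) (use False G_props[OF k] in auto)
    then show ?thesis using False Nf_closed[OF k] Nf_closed[of "k+1"] by simp
  qed
  show ?thesis
  proof (rule set_eqI, rule iffI)
    fix k assume "k \<in> {k :: nat. k \<ge> 1 \<and> int (Nf (k + 1)) - int (Nf k) = 2}"
    then have k: "k \<ge> 1" "k = tt (Suc (G k))" using key by auto
    then show "k \<in> {2 ^ (m + 1) - (m + 1) - 1 | m :: nat. m \<ge> 1}"
      unfolding tt_def by (intro CollectI exI[of _ "Suc (G k)"]) simp
  next
    fix k assume "k \<in> {2 ^ (m + 1) - (m + 1) - 1 | m :: nat. m \<ge> 1}"
    then obtain m where m: "m \<ge> 1" "k = tt m" unfolding tt_def by blast
    have k1: "k \<ge> 1" using m tt_le_iff[of 1 m] by (simp add: tt_def)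
    have "G k = m - 1"
      by (rule G_eq) (use m tt_less_iff[of "m - 1" m] in auto)
    then have "k = tt (Suc (G k))" using m by simp
    then show "k \<in> {k :: nat. k \<ge> 1 \<and> int (Nf (k + 1)) - int (Nf k) = 2}"
      using key[OF k1] k1 by simp
  qed
qed

end
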